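(* Let $\Omega_1,\Omega_2\subset\mathbb{C}$ and $Y\subsetneq\mathbb{C}$ be domains. Suppose $f:\Omega_1\to\Omega_2$ is holomorphic with $f(a)=b$ and $f(t)\neq b$ for all $t\in\Omega_1\setminus\{a\}$. Then for every $c\in Y$, $$\mathscr{C}_{\Omega_2}^{Y,c}(f(a))\,|f'(a)|\leq \mathscr{C}_{\Omega_1}^{Y,c}(a).$$
   Context: $\mathbb{D}=\{z\in\mathbb{C}:|z|<1\}$. For domains $\Omega\subset\mathbb{C}$, $Y\subsetneq\mathbb{C}$, and points $w\in\Omega$, $s\in Y$, let $\mathcal{H}^s_w(\Omega,Y)$ be the set of holomorphic maps $h:\Omega\to Y$ with $h(w)=s$ and $h(z)\neq s$ for all $z\in\Omega\setminus\{w\}$. For a domain $Y\subsetneq\mathbb{C}$ and $v\in Y$, the Hurwitz density is $\eta_Y(v)=2/r_Y(v)$, where $r_Y(v)=\max\{h'(0): h:\mathbb{D}\to Y \text{ holomorphic},\ h(0)=v,\ h(z)\neq v \text{ for } z\in\mathbb{D}\setminus\{0\},\ h'(0)>0\}$. The Carathéodory density of the Hurwitz metric of $\Omega$ relative to $Y$ is $\mathscr{C}_{\Omega}^{Y,s}(w)=\sup\{\eta_Y(h(w))|h'(w)| : h\in\mathcal{H}^s_w(\Omega,Y)\}$, defined to be $0$ if $\mathcal{H}^s_w(\Omega,Y)=\emptyset$. *)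

theory Defs
  imports "HOL-Complex_Analysis.Complex_Analysis"
begin

definition hurwitz_class :: "complex set \<Rightarrow> complex set \<Rightarrow> complex \<Rightarrow> complex \<Rightarrow> (complex \<Rightarrow> complex) set" where
  "hurwitz_class \<Omega> Y w s =
     {h. h holomorphic_on \<Omega> \<and> h ` \<Omega> \<subseteq> Y \<and> h w = s \<and> (\<forall>z\<in>\<Omega> - {w}. h z \<noteq> s)}"

text \<open>Hurwitz radius r_Y(v): the maximum of h'(0) over h in H^v_0(D,Y) with h'(0) > 0
  (the maximum is attained, so it equals the supremum).\<close>
definition hurwitz_radius :: "complex set \<Rightarrow> complex \<Rightarrow> real" where
  "hurwitz_radius Y v =
     Sup {Re (deriv h 0) | h. h \<in> hurwitz_class (ball 0 1) Y 0 v
                               \<and> deriv h 0 \<in> \<real> \<and> Re (deriv h 0) > 0}"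

definition hurwitz_density :: "complex set \<Rightarrow> complex \<Rightarrow> real" where
  "hurwitz_density Y v = 2 / hurwitz_radius Y v"

definition caratheodory_hurwitz :: "complex set \<Rightarrow> complex set \<Rightarrow> complex \<Rightarrow> complex \<Rightarrow> ereal" where
  "caratheodory_hurwitz \<Omega> Y s w =
     (if hurwitz_class \<Omega> Y w s = {} then 0
      else (SUP h\<in>hurwitz_class \<Omega> Y w s. ereal (hurwitz_density Y (h w) * cmod (deriv h w))))"

end

theory Submission
  imports Defs
begin

lemma bound_single:
  fixes h \<psi> :: "complex \<Rightarrow> complex" and R0 :: real
  assumes R0: "R0 > 0"
    and L: "\<And>f. \<lbrakk>f holomorphic_on cball 0 R0;
                 \<And>z. norm z \<le> R0 \<Longrightarrow> f z \<noteq> 0 \<and> f z \<noteq> 1\<rbrakk> \<Longrightarrow> f 0 = 1/2 \<Longrightarrow> norm(deriv f 0) < 1"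
    and hol: "h holomorphic_on ball 0 1" and img: "\<And>z. z \<in> ball 0 1 \<Longrightarrow> h z \<noteq> p"
    and h0: "h 0 = c" and hne: "\<And>z. z \<in> ball 0 1 - {0} \<Longrightarrow> h z \<noteq> c" and pc: "p \<noteq> c"
  shows "cmod (deriv h 0) \<le> 8 * pi * R0 * cmod (p - c)"
proof -
  define \<phi> where "\<phi> z = 1 - (h z - c) / (p - c)" for z
  have phol: "\<phi> holomorphic_on ball 0 1" unfolding \<phi>_def using hol pc
    by (intro holomorphic_intros) auto
  have pnz: "\<phi> z \<noteq> 0" if "z \<in> ball 0 1" for z
    using img[OF that] pc by (auto simp: \<phi>_def field_simps)
  obtain g where g: "g holomorphic_on ball 0 1" "\<And>x. x \<in> ball 0 1 \<Longrightarrow> exp (g x) = \<phi> x"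
    using holomorphic_logarithm_exists[of "ball 0 1" \<phi> 0] phol pnz by auto
  define \<psi> where "\<psi> z = g z - g 0" for z
  have psihol: "\<psi> holomorphic_on ball 0 1" unfolding \<psi>_def using g(1) by (intro holomorphic_intros) auto
  have phi0: "\<phi> 0 = 1" using h0 by (simp add: \<phi>_def)
  have exppsi: "exp (\<psi> z) = \<phi> z" if "z \<in> ball 0 1" for z
    using g(2)[OF that] g(2)[of 0] phi0 by (simp add: \<psi>_def exp_diff)
  have psi0: "\<psi> 0 = 0" by (simp add: \<psi>_def)
  have hz: "h z = c + (p - c) * (1 - exp (\<psi> z))" if "z \<in> ball 0 1" for z
    using exppsi[OF that] pc by (simp add: \<phi>_def field_simps)
  have psine: "\<psi> z \<noteq> 2 * pi * \<i> \<and> \<psi> z \<noteq> - (2 * pi * \<i>)" if zb: "z \<in> ball 0 1" for z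
  proof -
    have *: False if e: "exp (\<psi> z) = 1" and nz: "\<psi> z \<noteq> 0"
    proof -
      have "h z = c" using hz[OF zb] e by simp
      then have "z = 0" using hne zb by blast
      then show False using nz psi0 by simp
    qed
    show ?thesis
    proof
      show "\<psi> z \<noteq> 2 * pi * \<i>"
      proof
        assume a: "\<psi> z = 2 * pi * \<i>"
        have "exp (\<psi> z) = 1" unfolding a using exp_two_pi_i by simp
        then show False using * a by simp
      qed
      show "\<psi> z \<noteq> - (2 * pi * \<i>)"
      proof
        assume a: "\<psi> z = - (2 * pi * \<i>)"
        have "exp (\<psi> z) = 1" unfolding a exp_minus using exp_two_pi_i by simp
        then show False using * a by simp
      qed
    qed
  qed
  have dpsi: "(\<psi> has_field_derivative deriv \<psi> 0) (at 0)"
    by (rule holomorphic_derivI[OF psihol]) auto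
  have dH: "((\<lambda>z. c + (p - c) * (1 - exp (\<psi> z))) has_field_derivative (p - c) * (0 - exp (\<psi> 0) * deriv \<psi> 0)) (at 0)"
    using dpsi by (auto intro!: derivative_eq_intros)
  have dh: "(h has_field_derivative - ((p - c) * deriv \<psi> 0)) (at 0)"
    using has_field_derivative_transform_within_open[OF dH, of "ball 0 1" h] hz psi0 by simp
  then have dh0: "deriv h 0 = - ((p - c) * deriv \<psi> 0)" by (rule DERIV_imp_deriv)
  define F where "F (w::complex) = (\<psi> (w / (2 * complex_of_real R0)) + 2 * pi * \<i>) / (4 * pi * \<i>)" for w
  have inb: "w / (2 * complex_of_real R0) \<in> ball 0 1" if "norm w \<le> R0" for w :: complex
    using that R0 by (simp add: norm_divide)
  have Fhol: "F holomorphic_on cball 0 R0"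
  proof -
    have "(\<psi> \<circ> (\<lambda>w. w / (2 * complex_of_real R0))) holomorphic_on cball 0 R0"
      by (rule holomorphic_on_compose_gen[where t="ball 0 1"]) (auto intro!: holomorphic_intros psihol inb)
    then show ?thesis unfolding F_def o_def by (intro holomorphic_intros) auto
  qed
  have Fne: "F z \<noteq> 0 \<and> F z \<noteq> 1" if "norm z \<le> R0" for z
  proof -
    have "\<psi> (z / (2 * complex_of_real R0)) \<noteq> 2 * pi * \<i> \<and> \<psi> (z / (2 * complex_of_real R0)) \<noteq> - (2 * pi * \<i>)" using psine inb that by blast
    then show ?thesis unfolding F_def by (auto simp: field_simps add_eq_0_iff)
  qed
  have F0: "F 0 = 1/2" by (simp add: F_def psi0)
  define k where "k = 2 * complex_of_real R0"
  have k0: "k \<noteq> 0" using R0 by (simp add: k_def)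
  have d1: "((\<lambda>w. w / k) has_field_derivative 1 / k) (at 0)"
    by (rule DERIV_cdivide[OF DERIV_ident, simplified])
  have dpsi': "(\<psi> has_field_derivative deriv \<psi> 0) (at (0 / k))" using dpsi by simp
  have d2: "((\<lambda>w. \<psi> (w / k)) has_field_derivative deriv \<psi> 0 * (1 / k)) (at 0)"
    by (rule DERIV_chain2[OF dpsi' d1])
  have d3: "((\<lambda>w. (\<psi> (w / k) + 2 * pi * \<i>) / (4 * pi * \<i>)) has_field_derivative (deriv \<psi> 0 * (1 / k) + 0) / (4 * pi * \<i>)) (at 0)"
    by (intro DERIV_cdivide DERIV_add d2 DERIV_const)
  have dF: "(F has_field_derivative (deriv \<psi> 0 * (1 / (2 * complex_of_real R0))) / (4 * pi * \<i>)) (at 0)"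
    using d3 unfolding F_def k_def by simp
  have "norm (deriv F 0) < 1" using L[OF Fhol Fne F0] by blast
  then have "norm (deriv \<psi> 0 * (1 / (2 * complex_of_real R0)) / (4 * pi * \<i>)) < 1" using DERIV_imp_deriv[OF dF] by simp
  then have "norm (deriv \<psi> 0) < 8 * pi * R0" using R0 by (simp add: norm_divide norm_mult field_simps)
  then show ?thesis unfolding dh0 norm_minus_cancel norm_mult
    by (metis less_imp_le mult.commute mult_left_mono norm_ge_zero)
qed

lemma radius_pos:
  assumes "open Y" "Y \<noteq> UNIV" "c \<in> Y"
  shows "hurwitz_radius Y c > 0"
proof -
  obtain p where p: "p \<notin> Y" using assms(2) by blast
  have pc: "p \<noteq> c" using p assms(3) by blast
  obtain R where Rpos: "\<And>z. 0 < R z" and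
    RL: "\<And>f. \<lbrakk>f holomorphic_on cball 0 (R(f 0));
                 \<And>z. norm z \<le> R(f 0) \<Longrightarrow> f z \<noteq> 0 \<and> f z \<noteq> 1\<rbrakk> \<Longrightarrow> norm(deriv f 0) < 1"
    using Landau_Picard by blast
  define R0 where "R0 = R (1/2)"
  have R0: "R0 > 0" using Rpos by (simp add: R0_def)
  have L: "\<And>f. \<lbrakk>f holomorphic_on cball 0 R0;
                 \<And>z. norm z \<le> R0 \<Longrightarrow> f z \<noteq> 0 \<and> f z \<noteq> 1\<rbrakk> \<Longrightarrow> f 0 = 1/2 \<Longrightarrow> norm(deriv f 0) < 1"
    using RL unfolding R0_def by metis
  define S where "S = {Re (deriv h 0) | h. h \<in> hurwitz_class (ball 0 1) Y 0 c
                               \<and> deriv h 0 \<in> \<real> \<and> Re (deriv h 0) > 0}"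
  have bdd: "bdd_above S"
    unfolding bdd_above_def
  proof (intro exI ballI)
    fix x assume "x \<in> S"
    then obtain h where x: "x = Re (deriv h 0)" and h: "h \<in> hurwitz_class (ball 0 1) Y 0 c"
      unfolding S_def by blast
    have "cmod (deriv h 0) \<le> 8 * pi * R0 * cmod (p - c)"
      using h p by (intro bound_single[OF R0 L _ _ _ _ pc]) (auto simp: hurwitz_class_def image_subset_iff)
    then show "x \<le> 8 * pi * R0 * cmod (p - c)" unfolding x using complex_Re_le_cmod order_trans by blast
  qed
  obtain e where e: "e > 0" "ball c e \<subseteq> Y" using assms(1,3) open_contains_ball by blast
  define h where "h z = c + complex_of_real e * z" for z
  have dh: "(h has_field_derivative complex_of_real e) (at 0)"
    unfolding h_def by (auto intro!: derivative_eq_intros)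
  have hc: "h \<in> hurwitz_class (ball 0 1) Y 0 c"
    unfolding hurwitz_class_def
  proof (intro CollectI conjI ballI)
    show "h holomorphic_on ball 0 1" unfolding h_def by (intro holomorphic_intros)
    show "h ` ball 0 1 \<subseteq> Y"
    proof
      fix y assume "y \<in> h ` ball 0 1"
      then obtain z where z: "z \<in> ball 0 1" "y = h z" by blast
      have "dist c y = e * cmod z" using e z by (simp add: h_def dist_norm norm_mult)
      also have "\<dots> < e" using z e by simp
      finally show "y \<in> Y" using e by auto
    qed
    show "h 0 = c" by (simp add: h_def)
    fix z :: complex assume "z \<in> ball 0 1 - {0}"
    then show "h z \<noteq> c" using e by (auto simp: h_def)
  qed
  have "e \<in> S" unfolding S_def using hc DERIV_imp_deriv[OF dh] e by force
  then have "e \<le> Sup S" using bdd by (rule cSup_upper)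
  then show ?thesis using e unfolding hurwitz_radius_def S_def by simp
qed

theorem theorem3p11:
  fixes \<Omega>1 \<Omega>2 Y :: "complex set" and f :: "complex \<Rightarrow> complex" and a b c :: complex
  assumes "open \<Omega>1" "connected \<Omega>1"
    and "open \<Omega>2" "connected \<Omega>2"
    and "open Y" "connected Y" "Y \<noteq> UNIV"
    and "f holomorphic_on \<Omega>1" "f ` \<Omega>1 \<subseteq> \<Omega>2"
    and "a \<in> \<Omega>1" "f a = b" "\<forall>t\<in>\<Omega>1 - {a}. f t \<noteq> b"
    and "c \<in> Y"
  shows "caratheodory_hurwitz \<Omega>2 Y c (f a) * ereal (cmod (deriv f a))
           \<le> caratheodory_hurwitz \<Omega>1 Y c a"
proof -
  define D where "D = hurwitz_density Y c"
  have D0: "D \<ge> 0" using radius_pos[OF assms(5,7,13)] by (simp add: D_def hurwitz_density_def)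
  define S1 where "S1 = hurwitz_class \<Omega>1 Y a c"
  define S2 where "S2 = hurwitz_class \<Omega>2 Y b c"
  have val1: "h a = c" if "h \<in> S1" for h using that by (simp add: S1_def hurwitz_class_def)
  have val2: "h b = c" if "h \<in> S2" for h using that by (simp add: S2_def hurwitz_class_def)
  have C1: "caratheodory_hurwitz \<Omega>1 Y c a = (if S1 = {} then 0 else (SUP h\<in>S1. ereal (D * cmod (deriv h a))))"
    unfolding caratheodory_hurwitz_def S1_def[symmetric] D_def using val1 by (auto intro!: SUP_cong)
  have C2: "caratheodory_hurwitz \<Omega>2 Y c (f a) = (if S2 = {} then 0 else (SUP h\<in>S2. ereal (D * cmod (deriv h b))))"
    unfolding caratheodory_hurwitz_def assms(11) S2_def[symmetric] D_def using val2 by (auto intro!: SUP_cong)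
  have RHS0: "0 \<le> caratheodory_hurwitz \<Omega>1 Y c a"
  proof (cases "S1 = {}")
    case True then show ?thesis by (simp add: C1)
  next
    case False
    then obtain g where g: "g \<in> S1" by blast
    have "ereal 0 \<le> ereal (D * cmod (deriv g a))" using D0 by simp
    also have "\<dots> \<le> (SUP h\<in>S1. ereal (D * cmod (deriv h a)))" using g by (rule SUP_upper)
    finally show ?thesis using False by (simp add: C1 zero_ereal_def)
  qed
  show ?thesis
  proof (cases "S2 = {}")
    case True then show ?thesis using RHS0 by (simp add: C2)
  next
    case False
    have comp: "h \<circ> f \<in> S1 \<and> deriv (h \<circ> f) a = deriv h b * deriv f a" if h: "h \<in> S2" for h
    proof
      have hh: "h holomorphic_on \<Omega>2" "h ` \<Omega>2 \<subseteq> Y" "h b = c" "\<forall>z\<in>\<Omega>2 - {b}. h z \<noteq> c"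
        using h by (auto simp: S2_def hurwitz_class_def)
      show "h \<circ> f \<in> S1" unfolding S1_def hurwitz_class_def
      proof (intro CollectI conjI ballI)
        show "(h \<circ> f) holomorphic_on \<Omega>1" by (rule holomorphic_on_compose_gen[OF assms(8) hh(1) assms(9)])
        show "(h \<circ> f) ` \<Omega>1 \<subseteq> Y" using hh(2) assms(9) by auto
        show "(h \<circ> f) a = c" using hh(3) assms(11) by simp
        fix z assume z: "z \<in> \<Omega>1 - {a}"
        then have "f z \<in> \<Omega>2 - {b}" using assms(9,12) by auto
        then show "(h \<circ> f) z \<noteq> c" using hh(4) by simp
      qed
      have fa: "f a \<in> \<Omega>2" using assms(9,10) by auto
      have df: "(f has_field_derivative deriv f a) (at a)"
        by (rule holomorphic_derivI[OF assms(8,1,10)])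
      have dh: "(h has_field_derivative deriv h (f a)) (at (f a))"
        by (rule holomorphic_derivI[OF hh(1) assms(3) fa])
      have "((h \<circ> f) has_field_derivative deriv h (f a) * deriv f a) (at a)"
        using DERIV_chain[OF dh df] .
      then show "deriv (h \<circ> f) a = deriv h b * deriv f a"
        using DERIV_imp_deriv assms(11) by blast
    qed
    have "caratheodory_hurwitz \<Omega>2 Y c (f a) * ereal (cmod (deriv f a))
        = (SUP h\<in>S2. ereal (D * cmod (deriv h b)) * ereal (cmod (deriv f a)))"
      using False by (simp add: C2 Sup_ereal_mult_right')
    also have "\<dots> \<le> caratheodory_hurwitz \<Omega>1 Y c a"
    proof (rule SUP_least)
      fix h assume h: "h \<in> S2"
      have hf: "h \<circ> f \<in> S1" using comp[OF h] by blast
      then have ne: "S1 \<noteq> {}" by blast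
      have "ereal (D * cmod (deriv h b)) * ereal (cmod (deriv f a)) = ereal (D * cmod (deriv (h \<circ> f) a))"
        using comp[OF h] by (simp add: norm_mult)
      also have "\<dots> \<le> (SUP g\<in>S1. ereal (D * cmod (deriv g a)))" using hf by (rule SUP_upper)
      finally show "ereal (D * cmod (deriv h b)) * ereal (cmod (deriv f a)) \<le> caratheodory_hurwitz \<Omega>1 Y c a"
        using ne by (simp add: C1)
    qed
    finally show ?thesis .
  qed
qed

end
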